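(* Let $n\geq1$. The set $$\mathcal{H}_{n+1}=\Big\{h\neq0:\ h \text{ is a homogeneous harmonic polynomial on }\mathbb{R}^{n+1},\ h\text{ is }(n+2)\text{-symmetric},\ \int_{B_1}h(y)\,dy=0\Big\}$$ is nonempty, and the least degree of a polynomial $h\in\mathcal{H}_{n+1}$ equals $3$.
   Context: Fix $n+2$ points $q_1,\dots,q_{n+2}\in\mathbb{S}^n\subset\mathbb{R}^{n+1}$ spread evenly on $\mathbb{S}^n$ (vertices of an inscribed regular simplex). $\mathcal{S}_{n+2}(q)$ is the set of rotations $\phi\in SO(n+1)$ mapping $\{q_1,\dots,q_{n+2}\}$ onto itself; a function $h$ on $\mathbb{R}^{n+1}$ is $(n+2)$-symmetric if $h(\phi(y))=h(y)$ for all $y$ and all $\phi\in\mathcal{S}_{n+2}(q)$. $B_1$ is the unit ball of $\mathbb{R}^{n+1}$. *)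

theory Defs
  imports "HOL-Analysis.Analysis"
begin

text \<open>Ambient space R^(n+1) is modelled as real^'n with CARD('n) = n+1.\<close>

definition hom_poly :: "nat \<Rightarrow> (real^'n \<Rightarrow> real) \<Rightarrow> bool" where
  "hom_poly d h \<longleftrightarrow> (\<exists>c :: ('n \<Rightarrow> nat) \<Rightarrow> real. \<forall>x.
      h x = (\<Sum>\<alpha>\<in>{\<alpha>. sum \<alpha> UNIV = d}. c \<alpha> * (\<Prod>i\<in>UNIV. (x $ i) ^ (\<alpha> i))))"

definition laplacian :: "(real^'n \<Rightarrow> real) \<Rightarrow> real^'n \<Rightarrow> real" where
  "laplacian h x = (\<Sum>i\<in>UNIV. deriv (deriv (\<lambda>t. h (x + t *\<^sub>R axis i 1))) 0)"

definition harmonic :: "(real^'n \<Rightarrow> real) \<Rightarrow> bool" where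
  "harmonic h \<longleftrightarrow> (\<forall>x. laplacian h x = 0)"

definition regular_simplex_on_sphere :: "(nat \<Rightarrow> real^'n) \<Rightarrow> bool" where
  "regular_simplex_on_sphere q \<longleftrightarrow>
     (\<forall>i < CARD('n) + 1. norm (q i) = 1) \<and>
     (\<forall>i < CARD('n) + 1. \<forall>j < CARD('n) + 1. i \<noteq> j \<longrightarrow> q i \<bullet> q j = - 1 / real CARD('n))"

definition simplex_rotations :: "(nat \<Rightarrow> real^'n) \<Rightarrow> (real^'n \<Rightarrow> real^'n) set" where
  "simplex_rotations q = {\<phi>. orthogonal_transformation \<phi> \<and> det (matrix \<phi>) = 1 \<and>
      \<phi> ` (q ` {..<CARD('n) + 1}) = q ` {..<CARD('n) + 1}}"

definition simplex_symmetric :: "(nat \<Rightarrow> real^'n) \<Rightarrow> (real^'n \<Rightarrow> real) \<Rightarrow> bool" where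
  "simplex_symmetric q h \<longleftrightarrow> (\<forall>\<phi>\<in>simplex_rotations q. \<forall>y. h (\<phi> y) = h y)"

definition H_set :: "(nat \<Rightarrow> real^'n) \<Rightarrow> (real^'n \<Rightarrow> real) set" where
  "H_set q = {h. h \<noteq> (\<lambda>_. 0) \<and> (\<exists>d. hom_poly d h) \<and> harmonic h \<and>
      simplex_symmetric q h \<and> integral (ball 0 1) h = 0}"

end

theory Submission
  imports Defs
begin


definition mon :: "('n::finite \<Rightarrow> nat) \<Rightarrow> real^'n \<Rightarrow> real" where
  "mon \<alpha> x = (\<Prod>i\<in>UNIV. (x $ i) ^ (\<alpha> i))"

lemma hom_poly_mon: "hom_poly d h \<longleftrightarrow> (\<exists>c. \<forall>x. h x = (\<Sum>\<alpha>\<in>{\<alpha>. sum \<alpha> UNIV = d}. c \<alpha> * mon \<alpha> x))"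
  by (simp add: hom_poly_def mon_def)

lemma finA: "finite {\<alpha>::'n::finite \<Rightarrow> nat. sum \<alpha> UNIV = d}"
proof (rule finite_subset)
  show "{\<alpha>::'n \<Rightarrow> nat. sum \<alpha> UNIV = d} \<subseteq> PiE UNIV (\<lambda>_. {..d})"
    by (auto simp: PiE_UNIV_domain intro!: member_le_sum)
  show "finite (PiE UNIV (\<lambda>_::'n. {..d}))" by (rule finite_PiE) auto
qed

lemma hp_zero: "hom_poly d (\<lambda>_. 0)"
  unfolding hom_poly_mon by (rule exI[of _ "\<lambda>_. 0"]) simp

lemma hp_add: "hom_poly d f \<Longrightarrow> hom_poly d g \<Longrightarrow> hom_poly d (\<lambda>x. f x + g x)"
  unfolding hom_poly_mon
  apply (elim exE)
  subgoal for c e by (rule exI[of _ "\<lambda>a. c a + e a"]) (simp add: sum.distrib distrib_right)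
  done

lemma hp_scale: "hom_poly d f \<Longrightarrow> hom_poly d (\<lambda>x. r * f x)"
  unfolding hom_poly_mon
  apply (elim exE)
  subgoal for c by (rule exI[of _ "\<lambda>a. r * c a"]) (simp add: sum_distrib_left mult.assoc)
  done

lemma hp_sum: "finite S \<Longrightarrow> (\<And>s. s \<in> S \<Longrightarrow> hom_poly d (f s)) \<Longrightarrow> hom_poly d (\<lambda>x. \<Sum>s\<in>S. f s x)"
proof (induction S rule: finite_induct)
  case empty then show ?case using hp_zero by simp
next
  case (insert a F) then show ?case using hp_add[of d "f a" "\<lambda>x. \<Sum>s\<in>F. f s x"] by simp
qed

lemma hp_coord: "hom_poly 1 (\<lambda>x::real^'n. x $ k)"
  unfolding hom_poly_mon
proof (rule exI[of _ "\<lambda>a. if a = (\<lambda>i. if i = k then 1 else 0) then 1 else 0"], intro allI)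
  fix x :: "real^'n"
  let ?d = "(\<lambda>i. if i = k then 1 else 0) :: 'n \<Rightarrow> nat"
  have mem: "?d \<in> {\<alpha>. sum \<alpha> UNIV = 1}" by simp
  have "(\<Sum>\<alpha>\<in>{\<alpha>. sum \<alpha> UNIV = 1}. (if \<alpha> = ?d then 1 else 0) * mon \<alpha> x)
      = (\<Sum>\<alpha>\<in>{\<alpha>. sum \<alpha> UNIV = 1}. (if \<alpha> = ?d then mon ?d x else 0))"
    by (rule sum.cong) auto
  also have "\<dots> = mon ?d x" using sum.delta[OF finA, of ?d "\<lambda>_. mon ?d x" 1] mem by simp
  also have "\<dots> = x $ k" unfolding mon_def
    proof -
      have "(\<Prod>i\<in>UNIV. x$i ^ ?d i) = (\<Prod>i\<in>UNIV. if i = k then x$i else 1)"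
        by (rule prod.cong) auto
      then show "(\<Prod>i\<in>UNIV. x$i ^ ?d i) = x $ k" by simp
    qed
  finally show "x $ k = (\<Sum>\<alpha>\<in>{\<alpha>. sum \<alpha> UNIV = 1}. (if \<alpha> = ?d then 1 else 0) * mon \<alpha> x)" by simp
qed

lemma mon_add: "mon (\<lambda>i. \<alpha> i + \<beta> i) x = mon \<alpha> x * mon \<beta> x"
  by (simp add: mon_def power_add prod.distrib)

lemma hp_mult:
  assumes "hom_poly a f" "hom_poly b g"
  shows "hom_poly (a + b) (\<lambda>x::real^'n. f x * g x)"
proof -
  let ?A = "\<lambda>d. {\<alpha>::'n \<Rightarrow> nat. sum \<alpha> UNIV = d}"
  obtain c where c: "\<And>x. f x = (\<Sum>\<alpha>\<in>?A a. c \<alpha> * mon \<alpha> x)" using assms(1) unfolding hom_poly_mon by blast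
  obtain e where e: "\<And>x. g x = (\<Sum>\<alpha>\<in>?A b. e \<alpha> * mon \<alpha> x)" using assms(2) unfolding hom_poly_mon by blast
  define P where "P = ?A a \<times> ?A b"
  define F where "F p = c (fst p) * e (snd p)" for p
  define s where "s p = (\<lambda>i. fst p i + snd p i)" for p :: "('n \<Rightarrow> nat) \<times> ('n \<Rightarrow> nat)"
  have finP: "finite P" unfolding P_def using finA by auto
  have sP: "s ` P \<subseteq> ?A (a + b)" unfolding P_def s_def by (auto simp: sum.distrib)
  show ?thesis unfolding hom_poly_mon
  proof (rule exI[of _ "\<lambda>\<gamma>. \<Sum>p\<in>{p\<in>P. s p = \<gamma>}. F p"], intro allI)
    fix x
    have "f x * g x = (\<Sum>\<alpha>\<in>?A a. \<Sum>\<beta>\<in>?A b. c \<alpha> * mon \<alpha> x * (e \<beta> * mon \<beta> x))"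
      by (simp add: c e sum_product)
    also have "\<dots> = (\<Sum>p\<in>P. F p * mon (s p) x)"
      unfolding sum.cartesian_product P_def
      by (intro sum.cong refl) (auto simp: F_def s_def mon_add)
    also have "\<dots> = (\<Sum>\<gamma>\<in>?A (a+b). \<Sum>p\<in>{p\<in>P. s p = \<gamma>}. F p * mon (s p) x)"
        by (rule sum.group[OF finP finA sP, symmetric])
    also have "\<dots> = (\<Sum>\<gamma>\<in>?A (a+b). (\<Sum>p\<in>{p\<in>P. s p = \<gamma>}. F p) * mon \<gamma> x)"
      by (intro sum.cong refl) (simp add: sum_distrib_right)
    finally show "f x * g x = (\<Sum>\<gamma>\<in>?A (a+b). (\<Sum>p\<in>{p\<in>P. s p = \<gamma>}. F p) * mon \<gamma> x)" .
  qed
qed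

lemma hp_inner: "hom_poly 1 (\<lambda>x::real^'n. w \<bullet> x)"
proof -
  have "hom_poly 1 (\<lambda>x::real^'n. \<Sum>k\<in>UNIV. w $ k * x $ k)"
    by (intro hp_sum hp_scale hp_coord) auto
  then show ?thesis by (simp add: inner_vec_def)
qed

lemma hp_cube: "hom_poly 3 (\<lambda>x::real^'n. (w \<bullet> x) ^ 3)"
proof -
  have "hom_poly ((1 + 1) + 1) (\<lambda>x::real^'n. ((w \<bullet> x) * (w \<bullet> x)) * (w \<bullet> x))"
    by (intro hp_mult hp_inner)
  then have "hom_poly 3 (\<lambda>x::real^'n. ((w \<bullet> x) * (w \<bullet> x)) * (w \<bullet> x))"
    by (simp add: numeral_3_eq_3)
  then show ?thesis by (simp add: power3_eq_cube)
qed

lemma mon_peel: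
  assumes "sum \<alpha> UNIV = Suc d"
  shows "\<exists>k \<beta>. sum \<beta> UNIV = d \<and> (\<forall>x. mon \<alpha> x = x $ k * mon \<beta> x)"
proof -
  have "\<exists>k. \<alpha> k > 0"
  proof (rule ccontr)
    assume "\<not> (\<exists>k. \<alpha> k > 0)"
    then have "\<forall>k. \<alpha> k = 0" by simp
    then have "sum \<alpha> UNIV = 0" by simp
    then show False using assms by simp
  qed
  then obtain k where k: "\<alpha> k > 0" by blast
  define \<beta> where "\<beta> = \<alpha>(k := \<alpha> k - 1)"
  have bk: "\<beta> k = \<alpha> k - 1" unfolding \<beta>_def by simp
  have s1: "sum \<alpha> UNIV = \<alpha> k + sum \<alpha> (UNIV - {k})" by (simp add: sum.remove)
  have s2: "sum \<beta> UNIV = \<beta> k + sum \<beta> (UNIV - {k})" by (simp add: sum.remove)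
  have s3: "sum \<beta> (UNIV - {k}) = sum \<alpha> (UNIV - {k})" unfolding \<beta>_def by (rule sum.cong) auto
  have "sum \<beta> UNIV = d" using s1 s2 s3 k assms bk by linarith
  moreover have "mon \<alpha> x = x $ k * mon \<beta> x" for x
  proof -
    have p1: "mon \<alpha> x = x$k ^ \<alpha> k * (\<Prod>i\<in>UNIV - {k}. (x $ i) ^ (\<alpha> i))" unfolding mon_def by (simp add: prod.remove)
    have p2: "mon \<beta> x = x$k ^ \<beta> k * (\<Prod>i\<in>UNIV - {k}. (x $ i) ^ (\<beta> i))" unfolding mon_def by (simp add: prod.remove)
    have p3: "(\<Prod>i\<in>UNIV - {k}. (x $ i) ^ (\<beta> i)) = (\<Prod>i\<in>UNIV - {k}. (x $ i) ^ (\<alpha> i))"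
      unfolding \<beta>_def by (rule prod.cong) auto
    have ak: "\<alpha> k = Suc (\<beta> k)" using k bk by simp
    have p4: "x$k ^ \<alpha> k = x$k * x$k ^ \<beta> k" unfolding ak by (rule power_Suc)
    show ?thesis unfolding p1 p2 p3 p4 by (rule mult.assoc)
  qed
  ultimately show ?thesis by blast
qed

lemma mon_deg0: "sum \<alpha> UNIV = 0 \<Longrightarrow> mon \<alpha> x = 1"
  by (simp add: mon_def)

lemma mon_deg1: "sum \<alpha> UNIV = 1 \<Longrightarrow> \<exists>k. \<forall>x. mon \<alpha> x = x $ k"
proof -
  assume "sum \<alpha> UNIV = 1"
  then have "sum \<alpha> UNIV = Suc 0" by simp
  from mon_peel[OF this] obtain k \<beta> where kb: "sum \<beta> UNIV = 0" "\<forall>x. mon \<alpha> x = x $ k * mon \<beta> x"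
    by blast
  have "\<forall>x. mon \<alpha> x = x $ k" using kb mon_deg0[OF kb(1)] by simp
  then show ?thesis by blast
qed

lemma mon_deg2: "sum \<alpha> UNIV = 2 \<Longrightarrow> \<exists>k l. \<forall>x. mon \<alpha> x = x $ k * x $ l"
proof -
  assume "sum \<alpha> UNIV = 2"
  then have "sum \<alpha> UNIV = Suc 1" by simp
  from mon_peel[OF this] obtain k \<beta> where kb: "sum \<beta> UNIV = 1" "\<forall>x. mon \<alpha> x = x $ k * mon \<beta> x"
    by blast
  from mon_deg1[OF kb(1)] obtain l where "\<forall>x. mon \<beta> x = x $ l" by blast
  then have "\<forall>x. mon \<alpha> x = x $ k * x $ l" using kb(2) by simp
  then show ?thesis by blast
qed



definition hrefl :: "real^'n \<Rightarrow> real^'n \<Rightarrow> real^'n" where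
  "hrefl u x = x - (2 * (x \<bullet> u) / (u \<bullet> u)) *\<^sub>R u"

lemma refl_linear: "linear (hrefl u)"
  by (rule linearI) (simp_all add: hrefl_def inner_add_left algebra_simps add_divide_distrib scaleR_add_left)

lemma refl_inner: assumes "u \<noteq> 0" shows "hrefl u x \<bullet> hrefl u y = x \<bullet> y"
proof -
  have uu: "u \<bullet> u \<noteq> 0" using assms by simp
  show ?thesis unfolding hrefl_def
    using uu by (simp add: inner_diff_left inner_diff_right algebra_simps power2_eq_square inner_commute)
qed

lemma refl_orth: "u \<noteq> 0 \<Longrightarrow> orthogonal_transformation (hrefl u)"
  unfolding orthogonal_transformation_def using refl_linear refl_inner by blast

lemma refl_refl: assumes "u \<noteq> 0" shows "hrefl u (hrefl u x) = x"
proof -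
  have uu: "u \<bullet> u \<noteq> 0" using assms by simp
  have "hrefl u x \<bullet> u = - (x \<bullet> u)" unfolding hrefl_def using uu by (simp add: inner_diff_left)
  then show ?thesis unfolding hrefl_def[of u "hrefl u x"] by (simp add: hrefl_def)
qed

lemma refl_swap1: assumes "a \<bullet> a = b \<bullet> b" "a \<noteq> b" shows "hrefl (a - b) a = b"
proof -
  have uu: "(a - b) \<bullet> (a - b) \<noteq> 0" using assms by simp
  have "2 * (a \<bullet> (a - b)) = (a - b) \<bullet> (a - b)"
    using assms(1) by (simp add: inner_diff_left inner_diff_right inner_commute)
  then have h1: "2 * (a \<bullet> (a - b)) / ((a - b) \<bullet> (a - b)) = 1" using uu by simp
  show ?thesis unfolding hrefl_def by (simp only: h1) simp
qed

lemma refl_swap2: assumes "a \<bullet> a = b \<bullet> b" "a \<noteq> b" shows "hrefl (a - b) b = a"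
  using refl_refl[of "a - b" a] refl_swap1[OF assms] assms(2) by simp

lemma refl_fix: assumes "c \<bullet> u = 0" shows "hrefl u c = c"
  using assms unfolding hrefl_def by simp

lemma image_invol: "f ` Q \<subseteq> Q \<Longrightarrow> (\<And>x. f (f x) = x) \<Longrightarrow> f ` Q = Q"
proof
  assume a: "f ` Q \<subseteq> Q" and b: "\<And>x. f (f x) = x"
  show "f ` Q \<subseteq> Q" by (rule a)
  show "Q \<subseteq> f ` Q"
  proof
    fix x assume "x \<in> Q"
    then have "f x \<in> Q" using a by blast
    then show "x \<in> f ` Q" using image_eqI[of x f "f x"] b by simp
  qed
qed

locale simp_ctx =
  fixes q :: "nat \<Rightarrow> real^'n"
  assumes reg: "regular_simplex_on_sphere q"
    and card2: "CARD('n) \<ge> 2"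
begin


lemma m_pos: "real CARD('n) > 0" using card2 by simp

lemma qq: "i < CARD('n) + 1 \<Longrightarrow> q i \<bullet> q i = 1"
  using reg unfolding regular_simplex_on_sphere_def by (metis power2_norm_eq_inner power_one)

lemma qij: "i < CARD('n) + 1 \<Longrightarrow> j < CARD('n) + 1 \<Longrightarrow> i \<noteq> j \<Longrightarrow> q i \<bullet> q j = - 1 / real CARD('n)"
  using reg unfolding regular_simplex_on_sphere_def by blast

lemma qne: "i < CARD('n) + 1 \<Longrightarrow> j < CARD('n) + 1 \<Longrightarrow> i \<noteq> j \<Longrightarrow> q i \<noteq> q j"
proof
  assume h: "i < CARD('n) + 1" "j < CARD('n) + 1" "i \<noteq> j" "q i = q j"
  then have "1 = - 1 / real CARD('n)" using qq[of i] qij[of i j] by simp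
  then show False using m_pos by (simp add: field_simps)
qed

lemma qinj: "inj_on q {..<CARD('n) + 1}"
  unfolding inj_on_def using qne by blast

lemma qrow: assumes "i < CARD('n) + 1" shows "(\<Sum>j<CARD('n) + 1. q i \<bullet> q j) = 0"
proof -
  have "(\<Sum>j<CARD('n) + 1. q i \<bullet> q j) = q i \<bullet> q i + (\<Sum>j\<in>{..<CARD('n) + 1} - {i}. q i \<bullet> q j)"
    using assms by (intro sum.remove) auto
  also have "(\<Sum>j\<in>{..<CARD('n) + 1} - {i}. q i \<bullet> q j) = (\<Sum>j\<in>{..<CARD('n) + 1} - {i}. - 1 / real CARD('n))"
    using assms qij by (intro sum.cong) auto
  also have "\<dots> = - 1" using assms m_pos by simp
  finally show ?thesis using qq[OF assms] by simp
qed

lemma qsum: "(\<Sum>i<CARD('n) + 1. q i) = 0"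
proof -
  have "(\<Sum>i<CARD('n) + 1. q i) \<bullet> (\<Sum>i<CARD('n) + 1. q i) = (\<Sum>i<CARD('n) + 1. \<Sum>j<CARD('n) + 1. q i \<bullet> q j)"
    unfolding inner_sum_left by (simp only: inner_sum_right)
  also have "\<dots> = 0" using qrow by simp
  finally show ?thesis by simp
qed

lemma qindep: "independent (q ` {..<CARD('n)})"
  unfolding independent_explicit
proof (intro conjI allI impI ballI)
  show "finite (q ` {..<CARD('n)})" by simp
  fix c v
  assume c0: "(\<Sum>v\<in>q ` {..<CARD('n)}. c v *\<^sub>R v) = 0" and v: "v \<in> q ` {..<CARD('n)}"
  define I where "I = {..<CARD('n)}"
  define u where "u i = c (q i)" for i
  define T where "T = (\<Sum>i\<in>I. u i)"
  have injI: "inj_on q I" using qinj unfolding I_def by (rule inj_on_subset) auto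
  have s0: "(\<Sum>i\<in>I. u i *\<^sub>R q i) = 0"
    using c0 sum.reindex[OF injI, of "\<lambda>v. c v *\<^sub>R v"] unfolding I_def u_def by simp
  have uj: "u j * (1 + 1 / real CARD('n)) = T / real CARD('n)" if j: "j \<in> I" for j
  proof -
    have jN: "j < CARD('n) + 1" using j unfolding I_def by simp
    have "0 = q j \<bullet> (\<Sum>i\<in>I. u i *\<^sub>R q i)" using s0 by simp
    also have "\<dots> = (\<Sum>i\<in>I. u i * (q j \<bullet> q i))" by (simp add: inner_sum_right)
    also have "\<dots> = u j * (q j \<bullet> q j) + (\<Sum>i\<in>I - {j}. u i * (q j \<bullet> q i))"
      using j unfolding I_def by (simp add: sum.remove)
    also have "(\<Sum>i\<in>I - {j}. u i * (q j \<bullet> q i)) = (\<Sum>i\<in>I - {j}. u i * (- 1 / real CARD('n)))"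
      using j qij unfolding I_def by (intro sum.cong) auto
    also have "\<dots> = (\<Sum>i\<in>I - {j}. u i) * (- 1 / real CARD('n))" by (rule sum_distrib_right[symmetric])
    also have "(\<Sum>i\<in>I - {j}. u i) = T - u j" unfolding T_def using j unfolding I_def by (simp add: sum_diff1)
    finally have "0 = u j + (T - u j) * (- 1 / real CARD('n))" using qq[OF jN] by simp
    then show ?thesis using m_pos by (simp add: field_simps)
  qed
  have "T = (\<Sum>i\<in>I. T / (real CARD('n) + 1))"
  proof -
    have "T = (\<Sum>i\<in>I. u i)" by (simp add: T_def)
    also have "\<dots> = (\<Sum>i\<in>I. T / (real CARD('n) + 1))"
    proof (rule sum.cong)
      fix i assume "i \<in> I"
      from uj[OF this] show "u i = T / (real CARD('n) + 1)" using m_pos by (simp add: field_simps)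
    qed simp
    finally show ?thesis .
  qed
  then have "T = real CARD('n) * T / (real CARD('n) + 1)" unfolding I_def by simp
  then have T0: "T = 0" using m_pos by (simp add: field_simps)
  obtain j where j: "j \<in> I" "v = q j" using v unfolding I_def by blast
  have "u j * (1 + real CARD('n)) = 0" using uj[OF j(1)] T0 m_pos by (simp add: field_simps)
  moreover have "1 + real CARD('n) \<noteq> 0" by simp
  ultimately have "u j = 0" by simp
  then show "c v = 0" using j unfolding u_def by simp
qed

lemma qspan: "span (q ` {..<CARD('n) + 1}) = UNIV"
proof -
  have injI: "inj_on q {..<CARD('n)}" using qinj by (rule inj_on_subset) auto
  have "card (q ` {..<CARD('n)}) = CARD('n)" using card_image[OF injI] by simp
  then have "(UNIV :: (real^'n) set) \<subseteq> span (q ` {..<CARD('n)})"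
    by (intro card_ge_dim_independent qindep) auto
  also have "\<dots> \<subseteq> span (q ` {..<CARD('n) + 1})" by (intro span_mono image_mono) auto
  finally show ?thesis by blast
qed

end


definition psi :: "(nat \<Rightarrow> real^'n) \<Rightarrow> nat \<Rightarrow> nat \<Rightarrow> nat \<Rightarrow> real^'n \<Rightarrow> real^'n" where
  "psi q a b c = hrefl (q a - q c) \<circ> hrefl (q c - q b)"

definition rot :: "(nat \<Rightarrow> real^'n) \<Rightarrow> nat \<Rightarrow> nat \<Rightarrow> nat \<Rightarrow> real^'n \<Rightarrow> real^'n" where
  "rot q a b c = psi q a b c \<circ> psi q a b c"

context simp_ctx
begin

lemma refl_q1: "i < CARD('n) + 1 \<Longrightarrow> j < CARD('n) + 1 \<Longrightarrow> i \<noteq> j \<Longrightarrow> hrefl (q i - q j) (q i) = q j"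
  by (rule refl_swap1) (simp_all add: qq qne)

lemma refl_q2: "i < CARD('n) + 1 \<Longrightarrow> j < CARD('n) + 1 \<Longrightarrow> i \<noteq> j \<Longrightarrow> hrefl (q i - q j) (q j) = q i"
  by (rule refl_swap2) (simp_all add: qq qne)

lemma refl_q3: "i < CARD('n) + 1 \<Longrightarrow> j < CARD('n) + 1 \<Longrightarrow> l < CARD('n) + 1 \<Longrightarrow> l \<noteq> i \<Longrightarrow> l \<noteq> j
   \<Longrightarrow> hrefl (q i - q j) (q l) = q l"
  by (rule refl_fix) (simp add: inner_diff_right qij)

lemma refl_q_nz: "i < CARD('n) + 1 \<Longrightarrow> j < CARD('n) + 1 \<Longrightarrow> i \<noteq> j \<Longrightarrow> q i - q j \<noteq> 0"
  using qne by simp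

lemma refl_q_img: assumes "i < CARD('n) + 1" "j < CARD('n) + 1" "i \<noteq> j"
  shows "hrefl (q i - q j) ` (q ` {..<CARD('n) + 1}) = q ` {..<CARD('n) + 1}"
proof (rule image_invol)
  show "hrefl (q i - q j) ` q ` {..<CARD('n) + 1} \<subseteq> q ` {..<CARD('n) + 1}"
  proof
    fix y assume "y \<in> hrefl (q i - q j) ` q ` {..<CARD('n) + 1}"
    then obtain l where l: "l < CARD('n) + 1" "y = hrefl (q i - q j) (q l)" by auto
    show "y \<in> q ` {..<CARD('n) + 1}"
    proof (cases "l = i \<or> l = j")
      case True then show ?thesis using l assms refl_q1 refl_q2 by auto
    next
      case False then show ?thesis using l assms refl_q3 by auto
    qed
  qed
  show "hrefl (q i - q j) (hrefl (q i - q j) x) = x" for x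
    by (rule refl_refl) (rule refl_q_nz[OF assms])
qed

lemma psi_props:
  assumes "a < CARD('n) + 1" "b < CARD('n) + 1" "c < CARD('n) + 1" "a \<noteq> b" "b \<noteq> c" "a \<noteq> c"
  shows "psi q a b c (q a) = q c" "psi q a b c (q c) = q b" "psi q a b c (q b) = q a"
    "orthogonal_transformation (psi q a b c)"
    "psi q a b c ` (q ` {..<CARD('n) + 1}) = q ` {..<CARD('n) + 1}"
proof -
  show "psi q a b c (q a) = q c" unfolding psi_def using assms by (simp add: refl_q1 refl_q3)
  show "psi q a b c (q c) = q b" unfolding psi_def using assms by (simp add: refl_q1 refl_q3)
  show "psi q a b c (q b) = q a" unfolding psi_def using assms by (simp add: refl_q1 refl_q2)
  show "orthogonal_transformation (psi q a b c)" unfolding psi_def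
    using assms by (intro orthogonal_transformation_compose refl_orth refl_q_nz) auto
  have i1: "hrefl (q c - q b) ` (q ` {..<CARD('n) + 1}) = q ` {..<CARD('n) + 1}"
    using assms by (intro refl_q_img) auto
  have i2: "hrefl (q a - q c) ` (q ` {..<CARD('n) + 1}) = q ` {..<CARD('n) + 1}"
    using assms by (intro refl_q_img) auto
  show "psi q a b c ` (q ` {..<CARD('n) + 1}) = q ` {..<CARD('n) + 1}" unfolding psi_def image_comp[symmetric]
    by (simp only: i1 i2)
qed

lemma rot_props:
  assumes "a < CARD('n) + 1" "b < CARD('n) + 1" "c < CARD('n) + 1" "a \<noteq> b" "b \<noteq> c" "a \<noteq> c"
  shows "rot q a b c (q a) = q b" "rot q a b c (q b) = q c" "linear (rot q a b c)"
    "rot q a b c \<in> simplex_rotations q"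
proof -
  note P = psi_props[OF assms]
  show "rot q a b c (q a) = q b" unfolding rot_def using P by simp
  show "rot q a b c (q b) = q c" unfolding rot_def using P by simp
  have orth: "orthogonal_transformation (rot q a b c)" unfolding rot_def
    using P by (intro orthogonal_transformation_compose)
  then show "linear (rot q a b c)" by (rule orthogonal_transformation_linear)
  have lin: "linear (psi q a b c)" using P(4) by (rule orthogonal_transformation_linear)
  have "det (matrix (psi q a b c)) = 1 \<or> det (matrix (psi q a b c)) = - 1"
    using P(4) by (intro det_orthogonal_matrix) (simp add: orthogonal_transformation_matrix)
  then have "det (matrix (rot q a b c)) = 1" unfolding rot_def matrix_compose[OF lin lin] det_mul
    by auto
  moreover have "rot q a b c ` (q ` {..<CARD('n) + 1}) = q ` {..<CARD('n) + 1}"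
    unfolding rot_def image_comp[symmetric] using P by simp
  ultimately show "rot q a b c \<in> simplex_rotations q"
    using orth unfolding simplex_rotations_def by blast
qed

lemma third: "a < CARD('n) + 1 \<Longrightarrow> b < CARD('n) + 1 \<Longrightarrow> \<exists>c < CARD('n) + 1. c \<noteq> a \<and> c \<noteq> b"
proof -
  have "(0::nat) < CARD('n) + 1" "(1::nat) < CARD('n) + 1" "(2::nat) < CARD('n) + 1" using card2 by auto
  note lt = this
  show ?thesis
  proof (cases "a \<noteq> 0 \<and> b \<noteq> 0")
    case True then show ?thesis using lt(1) by (intro exI[of _ 0]) auto
  next
    case F1: False
    show ?thesis
    proof (cases "a \<noteq> 1 \<and> b \<noteq> 1")
      case True then show ?thesis using lt(2) by (intro exI[of _ 1]) auto
    next
      case False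
      then have "a \<noteq> 2 \<and> b \<noteq> 2" using F1 by auto
      then show ?thesis using lt(3) by (intro exI[of _ 2]) auto
    qed
  qed
qed

lemma inv_pt:
  assumes sym: "simplex_symmetric q h" and ab: "a < CARD('n) + 1" "b < CARD('n) + 1"
  shows "h (q a) = h (q b)"
proof (cases "a = b")
  case False
  obtain c where c: "c < CARD('n) + 1" "c \<noteq> a" "c \<noteq> b" using third[OF ab] by blast
  note R = rot_props[OF ab c(1) False c(3)[symmetric] c(2)[symmetric]]
  have "h (rot q a b c (q a)) = h (q a)" using sym R(4) unfolding simplex_symmetric_def by blast
  then show ?thesis using R(1) by simp
qed simp

lemma inv_pair:
  assumes sym: "simplex_symmetric q h"
    and "a < CARD('n) + 1" "b < CARD('n) + 1" "c < CARD('n) + 1" "a \<noteq> b" "b \<noteq> c" "a \<noteq> c"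
  shows "h (q b + q c) = h (q a + q b)"
proof -
  note R = rot_props[OF assms(2-7)]
  have "h (rot q a b c (q a + q b)) = h (q a + q b)" using sym R(4) unfolding simplex_symmetric_def by blast
  moreover have "rot q a b c (q a + q b) = q b + q c" using R(1,2) linear_add[OF R(3)] by simp
  ultimately show ?thesis by simp
qed

end


lemma deriv_ext: "(\<And>t. (f has_real_derivative f' t) (at t)) \<Longrightarrow> deriv f = f'"
  by (rule ext) (rule DERIV_imp_deriv)

lemma lap_quad: "laplacian (\<lambda>x::real^'n. a * (x \<bullet> x)) 0 = 2 * a * real CARD('n)"
proof -
  have f: "(\<lambda>t. a * ((0 + t *\<^sub>R axis i 1) \<bullet> (0 + t *\<^sub>R axis i (1::real)))) = (\<lambda>t. a * t^2)" for i :: 'n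
    by (rule ext) (simp add: inner_axis_axis power2_eq_square)
  have d1: "deriv (\<lambda>t::real. a * t^2) = (\<lambda>t. 2 * a * t)"
    by (rule deriv_ext) (auto intro!: derivative_eq_intros)
  have d2: "deriv (\<lambda>t::real. 2 * a * t) 0 = 2 * a"
    by (rule DERIV_imp_deriv) (auto intro!: derivative_eq_intros)
  show ?thesis unfolding laplacian_def f d1 d2 by simp
qed

lemma sq_sum_aux: "(\<Sum>i\<in>UNIV. 6 * ((v::real^'n) $ i)^2 * a) = 6 * a * (v \<bullet> v)"
proof -
  have vv: "v \<bullet> v = (\<Sum>i\<in>UNIV. v $ i * v $ i)" by (simp add: inner_vec_def)
  show ?thesis unfolding vv by (simp add: sum_distrib_left power2_eq_square mult_ac)
qed

lemma lap_cubic: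
  fixes w :: "'l \<Rightarrow> real^'n"
  assumes L: "finite L"
  shows "laplacian (\<lambda>y. \<Sum>l\<in>L. (w l \<bullet> y) ^ 3) x = (\<Sum>l\<in>L. 6 * (w l \<bullet> x) * (w l \<bullet> w l))"
proof -
  have f: "(\<lambda>t. \<Sum>l\<in>L. (w l \<bullet> (x + t *\<^sub>R axis i 1)) ^ 3) = (\<lambda>t. \<Sum>l\<in>L. (w l \<bullet> x + t * w l $ i) ^ 3)" for i
    by (rule ext) (simp add: inner_add_right inner_axis)
  have d1: "deriv (\<lambda>t. \<Sum>l\<in>L. (w l \<bullet> x + t * w l $ i) ^ 3) = (\<lambda>t. \<Sum>l\<in>L. 3 * w l $ i * (w l \<bullet> x + t * w l $ i) ^ 2)" for i
    by (rule deriv_ext) (auto intro!: derivative_eq_intros simp: algebra_simps)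
  have d2: "deriv (\<lambda>t. \<Sum>l\<in>L. 3 * w l $ i * (w l \<bullet> x + t * w l $ i) ^ 2) 0 = (\<Sum>l\<in>L. 6 * (w l $ i)^2 * (w l \<bullet> x))" for i
    by (rule DERIV_imp_deriv) (auto intro!: derivative_eq_intros simp: algebra_simps power2_eq_square)
  have "laplacian (\<lambda>y. \<Sum>l\<in>L. (w l \<bullet> y) ^ 3) x = (\<Sum>i\<in>UNIV. \<Sum>l\<in>L. 6 * (w l $ i)^2 * (w l \<bullet> x))"
    unfolding laplacian_def f d1 d2 ..
  also have "\<dots> = (\<Sum>l\<in>L. \<Sum>i\<in>UNIV. 6 * (w l $ i)^2 * (w l \<bullet> x))" by (rule sum.swap)
  also have "\<dots> = (\<Sum>l\<in>L. 6 * (w l \<bullet> x) * (w l \<bullet> w l))"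
    by (intro sum.cong refl) (rule sq_sum_aux)
  finally show ?thesis .
qed

lemma odd_int:
  assumes odd: "\<And>x. f (- x) = - f x"
  shows "integral (ball (0::real^'n) 1) f = (0::real)"
proof -
  define v :: "real^'n" where "v = (\<chi> i. 1)"
  define g where "g x = (if x \<in> ball 0 1 then f x else 0)" for x
  have sub: "ball 0 1 \<subseteq> cbox (-v) v"
  proof
    fix x :: "real^'n" assume "x \<in> ball 0 1"
    then have "norm x < 1" by simp
    then have "\<bar>x $ i\<bar> \<le> 1" for i using component_le_norm_cart[of x i] by linarith
    then show "x \<in> cbox (-v) v" unfolding mem_box_cart v_def by (simp add: abs_le_iff)
  qed
  have I: "integral (cbox (-v) v) g = integral (ball 0 1) f"
    unfolding g_def integral_restrict_Int using sub by (simp add: Int_absorb2)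
  have "g (- x) = - g x" for x unfolding g_def using odd by simp
  then have "integral (cbox (-v) (- (- v))) (\<lambda>x. g (- x)) = integral (cbox (-v) v) (\<lambda>x. - g x)" by simp
  then have "integral (cbox (-v) v) g = - integral (cbox (-v) v) g"
    using integral_reflect[of v "-v" g] by (simp add: integral_neg)
  then show ?thesis using I by simp
qed

lemma deg0_const: "hom_poly 0 h \<Longrightarrow> \<exists>C. \<forall>x. h x = C"
  unfolding hom_poly_mon by (auto simp: mon_deg0)

lemma deg1_linear: assumes "hom_poly 1 (h :: real^'n \<Rightarrow> real)" shows "linear h"
proof -
  let ?A = "{\<alpha>::'n \<Rightarrow> nat. sum \<alpha> UNIV = 1}"
  obtain c where c: "\<And>x. h x = (\<Sum>\<alpha>\<in>?A. c \<alpha> * mon \<alpha> x)" using assms unfolding hom_poly_mon by blast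
  have "\<forall>\<alpha>\<in>?A. \<exists>k. \<forall>x. mon \<alpha> x = x $ k" using mon_deg1 by blast
  then obtain K where K: "\<And>\<alpha> x. \<alpha> \<in> ?A \<Longrightarrow> mon \<alpha> x = x $ K \<alpha>" by metis
  have h: "h x = (\<Sum>\<alpha>\<in>?A. c \<alpha> * x $ K \<alpha>)" for x unfolding c by (intro sum.cong refl) (simp add: K)
  show ?thesis
    by (rule linearI) (simp_all add: h sum.distrib sum_distrib_left algebra_simps)
qed

lemma deg2_bilin:
  assumes "hom_poly 2 (h :: real^'n \<Rightarrow> real)"
  shows "\<exists>B. (\<forall>x. linear (B x)) \<and> (\<forall>x y. B x y = B y x) \<and> (\<forall>x y. h (x + y) = h x + h y + B x y)
     \<and> (\<forall>x. B x x = 2 * h x)"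
proof -
  let ?A = "{\<alpha>::'n \<Rightarrow> nat. sum \<alpha> UNIV = 2}"
  obtain c where c: "\<And>x. h x = (\<Sum>\<alpha>\<in>?A. c \<alpha> * mon \<alpha> x)" using assms unfolding hom_poly_mon by blast
  have "\<forall>\<alpha>\<in>?A. \<exists>p. \<forall>x. mon \<alpha> x = x $ fst p * x $ snd p" using mon_deg2 by fastforce
  then obtain P where P: "\<And>\<alpha> x. \<alpha> \<in> ?A \<Longrightarrow> mon \<alpha> x = x $ fst (P \<alpha>) * x $ snd (P \<alpha>)" by metis
  define K where "K \<alpha> = fst (P \<alpha>)" for \<alpha>
  define L where "L \<alpha> = snd (P \<alpha>)" for \<alpha>
  have h: "h x = (\<Sum>\<alpha>\<in>?A. c \<alpha> * (x $ K \<alpha> * x $ L \<alpha>))" for x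
    unfolding c K_def L_def by (intro sum.cong refl) (simp add: P)
  define B where "B x y = (\<Sum>\<alpha>\<in>?A. c \<alpha> * (x $ K \<alpha> * y $ L \<alpha> + y $ K \<alpha> * x $ L \<alpha>))" for x y
  have "linear (B x)" for x
    by (rule linearI) (simp_all add: B_def sum.distrib sum_distrib_left algebra_simps)
  moreover have "B x y = B y x" for x y unfolding B_def by (simp add: algebra_simps)
  moreover have "h (x + y) = h x + h y + B x y" for x y
    unfolding h B_def by (simp add: sum.distrib[symmetric] algebra_simps)
  moreover have "B x x = 2 * h x" for x
    unfolding h B_def by (simp add: sum_distrib_left algebra_simps)
  ultimately show ?thesis by blast
qed



lemma allpairs:
  fixes G :: "nat \<Rightarrow> nat \<Rightarrow> real"
  assumes sym: "\<And>i j. i < N \<Longrightarrow> j < N \<Longrightarrow> G i j = G j i"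
    and tri: "\<And>a b c. a < N \<Longrightarrow> b < N \<Longrightarrow> c < N \<Longrightarrow> a \<noteq> b \<Longrightarrow> b \<noteq> c \<Longrightarrow> a \<noteq> c \<Longrightarrow> G b c = G a b"
    and N: "2 < N" and ij: "i < N" "j < N" "i \<noteq> j"
  shows "G i j = G 0 1"
proof -
  have step: "G x y = G x z" if "x < N" "y < N" "z < N" "x \<noteq> y" "y \<noteq> z" "x \<noteq> z" for x y z
    using tri[of y x z] sym[of x y] that by simp
  have one: "G 1 j' = G 0 1" if "j' < N" "j' \<noteq> 1" for j'
  proof (cases "j' = 0")
    case True then show ?thesis using sym[of 1 0] N by simp
  next
    case False
    then have "G 1 j' = G 1 0" using step[of 1 j' 0] that N by simp
    then show ?thesis using sym[of 1 0] N by simp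
  qed
  show ?thesis
  proof (cases "i = 1")
    case True then show ?thesis using one ij by simp
  next
    case i1: False
    have gi1: "G i 1 = G 0 1"
    proof (cases "i = 0")
      case True then show ?thesis by simp
    next
      case False
      have "G i 1 = G 1 i" using sym[of i 1] ij N by simp
      also have "\<dots> = G 0 1" using one[of i] ij i1 by simp
      finally show ?thesis .
    qed
    show ?thesis
    proof (cases "j = 1")
      case True then show ?thesis using gi1 by simp
    next
      case False
      then have "G i j = G i 1" using step[of i j 1] ij i1 N by simp
      then show ?thesis using gi1 by simp
    qed
  qed
qed

lemma ball_int_pos: "integral (ball (0::real^'n) 1) (\<lambda>x. 1::real) > 0"
  using lmeasure_integral[of "ball (0::real^'n) 1"] content_ball_pos[of 1 "0::real^'n"]
  by (metis lmeasurable_ball measure_completion sets_lborel zero_less_one borel_open open_ball)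

context simp_ctx
begin

lemma no_deg0: assumes "h \<in> H_set q" "hom_poly 0 h" shows False
proof -
  obtain C where C: "\<And>x. h x = C" using deg0_const[OF assms(2)] by blast
  then have hC: "h = (\<lambda>x. C * 1)" by auto
  have "0 = integral (ball 0 1) h" using assms(1) unfolding H_set_def by simp
  also have "\<dots> = C * integral (ball (0::real^'n) 1) (\<lambda>x. 1)" unfolding hC by (rule integral_mult_right)
  finally have "C = 0" using ball_int_pos[where 'n='n] by simp
  then show False using assms(1) hC unfolding H_set_def by simp
qed

lemma no_deg1: assumes "h \<in> H_set q" "hom_poly 1 h" shows False
proof -
  have lin: "linear h" using deg1_linear[OF assms(2)] .
  have sym: "simplex_symmetric q h" using assms(1) unfolding H_set_def by simp
  define a0 where "a0 = h (q 0)"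
  have a: "h (q i) = a0" if "i < CARD('n) + 1" for i using inv_pt[OF sym that] unfolding a0_def by simp
  have "h (\<Sum>i<CARD('n) + 1. q i) = (\<Sum>i<CARD('n) + 1. h (q i))" by (rule linear_sum[OF lin])
  also have "\<dots> = (\<Sum>i<CARD('n) + 1. a0)" using a by (intro sum.cong) auto
  finally have "h 0 = (real CARD('n) + 1) * a0" using qsum by simp
  then have a00: "a0 = 0" using linear_0[OF lin] by (simp add: add_nonneg_eq_0_iff)
  have "h x = 0" for x
  proof (rule real_vector.linear_eq_0_on_span[OF lin])
    show "x \<in> span (q ` {..<CARD('n)+1})" unfolding qspan by (rule UNIV_I)
    show "y \<in> q ` {..<CARD('n)+1} \<Longrightarrow> h y = 0" for y using a a00 by auto
  qed
  then show False using assms(1) unfolding H_set_def by auto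
qed

lemma no_deg2: assumes "h \<in> H_set q" "hom_poly 2 h" shows False
proof -
  obtain B where lin: "\<And>x. linear (B x)" and Bs: "\<And>x y. B x y = B y x"
    and Bp: "\<And>x y. h (x + y) = h x + h y + B x y" and Bd: "\<And>x. B x x = 2 * h x"
    using deg2_bilin[OF assms(2)] by blast
  have sym: "simplex_symmetric q h" using assms(1) unfolding H_set_def by simp
  define a0 where "a0 = h (q 0)"
  have a: "h (q i) = a0" if "i < CARD('n) + 1" for i using inv_pt[OF sym that] unfolding a0_def by simp
  define G where "G i j = B (q i) (q j)" for i j
  define \<beta> where "\<beta> = G 0 1"
  have G: "G i j = \<beta>" if "i < CARD('n) + 1" "j < CARD('n) + 1" "i \<noteq> j" for i j
    unfolding \<beta>_def
  proof (rule allpairs[where N = "CARD('n) + 1"])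
    show "G i j = G j i" for i j unfolding G_def by (rule Bs)
    show "G b c = G a b" if "a < CARD('n) + 1" "b < CARD('n) + 1" "c < CARD('n) + 1" "a \<noteq> b" "b \<noteq> c" "a \<noteq> c" for a b c
    proof -
      have "h (q b + q c) = h (q a + q b)" by (rule inv_pair[OF sym that])
      then show ?thesis unfolding G_def using Bp[of "q b" "q c"] Bp[of "q a" "q b"] a that by simp
    qed
    show "2 < CARD('n) + 1" using card2 by simp
  qed (use that in auto)
  have row: "2 * a0 + real CARD('n) * \<beta> = 0" 
  proof -
    have "0 = B (q 0) (\<Sum>j<CARD('n) + 1. q j)" using qsum linear_0[OF lin] by simp
    also have "\<dots> = (\<Sum>j<CARD('n) + 1. G 0 j)" unfolding G_def by (rule linear_sum[OF lin])
    also have "\<dots> = G 0 0 + (\<Sum>j\<in>{..<CARD('n) + 1} - {0}. G 0 j)" by (intro sum.remove) auto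
    also have "(\<Sum>j\<in>{..<CARD('n) + 1} - {0}. G 0 j) = (\<Sum>j\<in>{..<CARD('n) + 1} - {0}. \<beta>)"
      using G by (intro sum.cong) auto
    also have "G 0 0 = 2 * a0" unfolding G_def Bd a0_def ..
    finally show ?thesis by simp
  qed
  have Bq: "B (q i) (q j) = 2 * a0 * (q i \<bullet> q j)" if "i < CARD('n) + 1" "j < CARD('n) + 1" for i j
  proof (cases "i = j")
    case True then show ?thesis using Bd a qq that by simp
  next
    case False
    have "B (q i) (q j) = \<beta>" using G[OF that False] unfolding G_def by simp
    also have "\<dots> = 2 * a0 * (- 1 / real CARD('n))" using row m_pos by (simp add: field_simps)
    finally show ?thesis using qij[OF that False] by simp
  qed
  define D where "D x y = B x y - 2 * a0 * (x \<bullet> y)" for x y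
  have linD: "linear (D x)" for x
    by (rule linearI) (simp_all add: D_def linear_add[OF lin] linear_scale[OF lin] inner_add_right algebra_simps)
  have Dsym: "D x y = D y x" for x y unfolding D_def by (simp add: Bs inner_commute)
  have D1: "D (q i) y = 0" if "i < CARD('n) + 1" for i y
  proof (rule real_vector.linear_eq_0_on_span[OF linD])
    show "y \<in> span (q ` {..<CARD('n)+1})" unfolding qspan by (rule UNIV_I)
    show "z \<in> q ` {..<CARD('n)+1} \<Longrightarrow> D (q i) z = 0" for z using Bq that unfolding D_def by auto
  qed
  have D2: "D y x = 0" for x y
  proof (rule real_vector.linear_eq_0_on_span[OF linD])
    show "x \<in> span (q ` {..<CARD('n)+1})" unfolding qspan by (rule UNIV_I)
    show "z \<in> q ` {..<CARD('n)+1} \<Longrightarrow> D y z = 0" for z using D1 Dsym by auto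
  qed
  have "h x = a0 * (x \<bullet> x)" for x using D2[of x x] Bd[of x] unfolding D_def by simp
  then have hf: "h = (\<lambda>x. a0 * (x \<bullet> x))" by auto
  have "laplacian h 0 = 0" using assms(1) unfolding H_set_def harmonic_def by simp
  then have "2 * a0 * real CARD('n) = 0" unfolding hf lap_quad .
  then have "a0 = 0" using m_pos by simp
  then show False using assms(1) hf unfolding H_set_def by simp
qed

end


context simp_ctx
begin

lemma h3_props:
  defines "h \<equiv> (\<lambda>y. \<Sum>l<CARD('n) + 1. (q l \<bullet> y) ^ 3)"
  shows "h \<in> H_set q" "hom_poly 3 h"
proof -
  show hom: "hom_poly 3 h" unfolding h_def by (intro hp_sum hp_cube) auto
  have harm: "harmonic h" unfolding harmonic_def
  proof
    fix x
    have "laplacian h x = (\<Sum>l<CARD('n) + 1. 6 * (q l \<bullet> x) * (q l \<bullet> q l))"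
      unfolding h_def by (rule lap_cubic) simp
    also have "\<dots> = (\<Sum>l<CARD('n) + 1. 6 * (q l \<bullet> x))" using qq by (intro sum.cong) auto
    also have "\<dots> = 6 * ((\<Sum>l<CARD('n) + 1. q l) \<bullet> x)" by (simp only: inner_sum_left sum_distrib_left)
    also have "\<dots> = 0" using qsum by simp
    finally show "laplacian h x = 0" .
  qed
  have hQ: "h y = (\<Sum>v\<in>q ` {..<CARD('n) + 1}. (v \<bullet> y) ^ 3)" for y
    unfolding h_def using sum.reindex[OF qinj, of "\<lambda>v. (v \<bullet> y) ^ 3"] by simp
  have symm: "simplex_symmetric q h" unfolding simplex_symmetric_def
  proof (intro ballI allI)
    fix \<phi> y assume "\<phi> \<in> simplex_rotations q"
    then have orth: "orthogonal_transformation \<phi>" and img: "\<phi> ` (q ` {..<CARD('n) + 1}) = q ` {..<CARD('n) + 1}"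
      unfolding simplex_rotations_def by auto
    have inj: "inj_on \<phi> (q ` {..<CARD('n) + 1})" using orthogonal_transformation_inj[OF orth] by (rule inj_on_subset) simp
    have "h (\<phi> y) = (\<Sum>v\<in>\<phi> ` (q ` {..<CARD('n) + 1}). (v \<bullet> \<phi> y) ^ 3)" unfolding hQ img ..
    also have "\<dots> = (\<Sum>w\<in>q ` {..<CARD('n) + 1}. (\<phi> w \<bullet> \<phi> y) ^ 3)" using sum.reindex[OF inj] by simp
    also have "\<dots> = (\<Sum>w\<in>q ` {..<CARD('n) + 1}. (w \<bullet> y) ^ 3)"
      using orth unfolding orthogonal_transformation_def by simp
    finally show "h (\<phi> y) = h y" unfolding hQ .
  qed
  have int0: "integral (ball 0 1) h = 0"
    by (rule odd_int) (simp add: h_def sum_negf)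
  have val: "h (q 0) = 1 - 1 / (real CARD('n))^2"
  proof -
    have "h (q 0) = (q 0 \<bullet> q 0) ^ 3 + (\<Sum>l\<in>{..<CARD('n) + 1} - {0}. (q l \<bullet> q 0) ^ 3)"
      unfolding h_def by (intro sum.remove) auto
    also have "(\<Sum>l\<in>{..<CARD('n) + 1} - {0}. (q l \<bullet> q 0) ^ 3) = (\<Sum>l\<in>{..<CARD('n) + 1} - {0}. (- 1 / real CARD('n)) ^ 3)"
      using qij by (intro sum.cong) auto
    also have "\<dots> = real CARD('n) * (- 1 / real CARD('n)) ^ 3" by simp
    finally show ?thesis using qq[of 0] m_pos by (simp add: field_simps power2_eq_square power3_eq_cube)
  qed
  have m2: "real CARD('n) \<ge> 2" using card2 by simp
  have "(real CARD('n))^2 \<ge> 2^2" by (rule power_mono[OF m2]) simp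
  then have "1 / (real CARD('n))^2 < 1" by simp
  then have "h (q 0) \<noteq> 0" unfolding val by simp
  then have "h \<noteq> (\<lambda>_. 0)" by auto
  then show "h \<in> H_set q" unfolding H_set_def using hom harm symm int0 by blast
qed

end

theorem proposition8p1:
  fixes q :: "nat \<Rightarrow> real^'n"
  assumes "CARD('n) \<ge> 2"
    and "regular_simplex_on_sphere q"
  shows "H_set q \<noteq> {} \<and> (LEAST d. \<exists>h\<in>H_set q. hom_poly d h) = 3"
proof -
  interpret simp_ctx q by unfold_locales (use assms in auto)
  note H = h3_props
  have "(LEAST d. \<exists>h\<in>H_set q. hom_poly d h) = 3"
  proof (rule Least_equality)
    show "\<exists>h\<in>H_set q. hom_poly 3 h" using H by blast
  next
    fix d assume "\<exists>h\<in>H_set q. hom_poly d h"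
    then obtain h where h: "h \<in> H_set q" "hom_poly d h" by blast
    show "3 \<le> d"
    proof (rule ccontr)
      assume "\<not> 3 \<le> d"
      then have "d = 0 \<or> d = 1 \<or> d = 2" by auto
      then show False using no_deg0[OF h(1)] no_deg1[OF h(1)] no_deg2[OF h(1)] h(2) by auto
    qed
  qed
  then show ?thesis using H by auto
qed


end
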